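(* Let $p=2$ and let $a,b\in\mathbb{C}_2$ with $a\neq0$, $b\neq0$, $a\neq b$ and $|2a|_2>|b|_2$. Let $P=-\frac1b$, $D=\mathbb{C}_2\setminus\{P\}$, $f(x)=\frac{ax^2}{bx+1}$ on $D$, $x_1=0$, $x_2=\frac1{a-b}$, and $r_1=\frac1{|a|_2}$. Then $x_1$ and $x_2$ are attracting fixed points of $f$, and $$A(x_1)=B_{r_1}(x_1),\qquad A(x_2)=B_{r_1}(x_2).$$
   Context: $\mathbb{C}_2$ is the field of complex $2$-adic numbers with $2$-adic norm $|\cdot|_2$. For $c\in\mathbb{C}_2$, $r>0$: $B_r(c)=\{x:|x-c|_2<r\}$. For $y\in D$, $y^{(n)}=f^n(y)$ is the $n$-th iterate (defined as long as no earlier iterate equals $P$). A fixed point $x^{(0)}$ of $f$ is attracting if $|f'(x^{(0)})|_2<1$. Its basin of attraction is $A(x^{(0)})=\{y: y^{(n)}\text{ defined for all }n,\ y^{(n)}\to x^{(0)}\}$. *)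

theory Defs
  imports Complex_Main "HOL-Computational_Algebra.Polynomial"
begin

(* A field 'a together with a map nv :: 'a => real which is (up to isometric
   isomorphism) the field C_2 of complex 2-adic numbers with |.|_2:
   a non-archimedean absolute value with |2| = 1/2, complete, algebraically
   closed, and in which the algebraic numbers (roots of nonzero integer
   polynomials) are dense. *)

definition nv_conv :: "('a::field \<Rightarrow> real) \<Rightarrow> (nat \<Rightarrow> 'a) \<Rightarrow> 'a \<Rightarrow> bool" where
  "nv_conv nv X L \<longleftrightarrow> (\<forall>\<epsilon>>0. \<exists>N. \<forall>n\<ge>N. nv (X n - L) < \<epsilon>)"

definition nv_cauchy :: "('a::field \<Rightarrow> real) \<Rightarrow> (nat \<Rightarrow> 'a) \<Rightarrow> bool" where
  "nv_cauchy nv X \<longleftrightarrow> (\<forall>\<epsilon>>0. \<exists>N. \<forall>m\<ge>N. \<forall>n\<ge>N. nv (X m - X n) < \<epsilon>)"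

definition complex_2adic :: "('a::field \<Rightarrow> real) \<Rightarrow> bool" where
  "complex_2adic nv \<longleftrightarrow>
     (\<forall>x. nv x \<ge> 0) \<and> (\<forall>x. nv x = 0 \<longleftrightarrow> x = 0) \<and>
     (\<forall>x y. nv (x * y) = nv x * nv y) \<and>
     (\<forall>x y. nv (x + y) \<le> max (nv x) (nv y)) \<and>
     nv 2 = 1/2 \<and>
     (\<forall>X. nv_cauchy nv X \<longrightarrow> (\<exists>L. nv_conv nv X L)) \<and>
     (\<forall>p::'a poly. degree p > 0 \<longrightarrow> (\<exists>x. poly p x = 0)) \<and>
     (\<forall>x \<epsilon>. \<epsilon> > 0 \<longrightarrow> (\<exists>y. (\<exists>q::int poly. q \<noteq> 0 \<and> poly (map_poly of_int q) y = 0)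
                                 \<and> nv (x - y) < \<epsilon>))"

definition nv_ball :: "('a::field \<Rightarrow> real) \<Rightarrow> 'a \<Rightarrow> real \<Rightarrow> 'a set" where
  "nv_ball nv c r = {x. nv (x - c) < r}"

definition nv_has_deriv :: "('a::field \<Rightarrow> real) \<Rightarrow> ('a \<Rightarrow> 'a) \<Rightarrow> 'a \<Rightarrow> 'a \<Rightarrow> bool" where
  "nv_has_deriv nv f x d \<longleftrightarrow>
     (\<forall>\<epsilon>>0. \<exists>\<delta>>0. \<forall>y. y \<noteq> x \<and> nv (y - x) < \<delta> \<longrightarrow> nv ((f y - f x) / (y - x) - d) < \<epsilon>)"

definition attracting_fixed_point ::
  "('a::field \<Rightarrow> real) \<Rightarrow> ('a \<Rightarrow> 'a) \<Rightarrow> 'a \<Rightarrow> 'a \<Rightarrow> bool" where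
  "attracting_fixed_point nv f P x0 \<longleftrightarrow>
     x0 \<noteq> P \<and> f x0 = x0 \<and> (\<exists>d. nv_has_deriv nv f x0 d \<and> nv d < 1)"

(* basin of attraction: all iterates defined (never hit the pole P) and converge to x0 *)
definition basin :: "('a::field \<Rightarrow> real) \<Rightarrow> ('a \<Rightarrow> 'a) \<Rightarrow> 'a \<Rightarrow> 'a \<Rightarrow> 'a set" where
  "basin nv f P x0 = {y. (\<forall>n. (f ^^ n) y \<noteq> P) \<and> nv_conv nv (\<lambda>n. (f ^^ n) y) x0}"

end

theory Submission
  imports Defs
begin

locale ultra =
  fixes nv :: "'a::field \<Rightarrow> real"
  assumes nonneg: "nv x \<ge> 0"
    and zero_iff: "nv x = 0 \<longleftrightarrow> x = 0"
    and mult: "nv (x * y) = nv x * nv y"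
    and ultra: "nv (x + y) \<le> max (nv x) (nv y)"
begin

lemma one: "nv 1 = 1"
proof -
  have "nv 1 = nv 1 * nv 1" using mult[of 1 1] by simp
  moreover have "nv 1 \<noteq> 0" using zero_iff by simp
  ultimately show ?thesis by simp
qed

lemma minus: "nv (- x) = nv x"
proof -
  have "nv (-1) * nv (-1) = 1" using mult[of "-1" "-1"] one by simp
  moreover have "nv (-1) \<ge> 0" by (rule nonneg)
  ultimately have "nv (-1) = 1"
    by (metis abs_of_nonneg real_sqrt_abs real_sqrt_mult_self real_sqrt_one power2_eq_square)
  thus ?thesis using mult[of "-1" x] by simp
qed

lemma inv: "nv (inverse x) = inverse (nv x)"
proof (cases "x = 0")
  case True thus ?thesis using zero_iff[of 0] by simp
next
  case False
  have "nv x * nv (inverse x) = 1" using mult[of x "inverse x"] one False by simp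
  thus ?thesis by (metis inverse_unique)
qed

lemma divide: "nv (x / y) = nv x / nv y"
  by (simp add: divide_inverse mult inv)

lemma commute: "nv (x - y) = nv (y - x)"
  by (metis minus minus_diff_eq)

lemma diff_le: "nv (x - y) \<le> max (nv x) (nv y)"
  using ultra[of x "-y"] minus[of y] by simp

lemma pos: "x \<noteq> 0 \<Longrightarrow> nv x > 0"
  using nonneg[of x] zero_iff[of x] by linarith

lemma strict: assumes "nv x < nv y" shows "nv (x + y) = nv y"
proof -
  have 1: "nv (x + y) \<le> nv y" using ultra[of x y] assms by simp
  have "nv y \<le> max (nv (x + y)) (nv (- x))" using ultra[of "x+y" "-x"] by simp
  hence "nv y \<le> nv (x + y)" using assms minus[of x] by (auto simp: max_def split: if_splits)
  thus ?thesis using 1 by simp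
qed

lemma contr_iter:
  assumes "0 \<le> t" "t \<le> 1" "\<And>z. nv (z - c) \<le> d \<Longrightarrow> nv (f z - c) \<le> t * nv (z - c)"
    "nv (y - c) \<le> d"
  shows "nv ((f ^^ n) y - c) \<le> t ^ n * nv (y - c)"
proof (induction n)
  case 0 thus ?case by simp
next
  case (Suc n)
  have "t ^ n * nv (y - c) \<le> nv (y - c)"
    using assms(1,2) nonneg[of "y - c"] by (simp add: mult_left_le_one_le power_le_one)
  hence "nv ((f ^^ n) y - c) \<le> d" using Suc assms(4) by linarith
  hence "nv ((f ^^ Suc n) y - c) \<le> t * nv ((f ^^ n) y - c)" using assms(3) by simp
  also have "\<dots> \<le> t * (t ^ n * nv (y - c))" using Suc assms(1) mult_left_mono by blast
  finally show ?case by simp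
qed

lemma contr_conv:
  assumes "0 \<le> t" "t < 1" "\<And>z. nv (z - c) \<le> d \<Longrightarrow> nv (f z - c) \<le> t * nv (z - c)"
    "nv (y - c) \<le> d"
  shows "nv_conv nv (\<lambda>n. (f ^^ n) y) c"
  unfolding nv_conv_def
proof (intro allI impI)
  fix e :: real assume e: "e > 0"
  have "(\<lambda>n. t ^ n * nv (y - c)) \<longlonglongrightarrow> 0 * nv (y - c)"
    by (intro tendsto_mult tendsto_const LIMSEQ_power_zero) (use assms in auto)
  hence "eventually (\<lambda>n. t ^ n * nv (y - c) < e) sequentially"
    using e by (simp add: order_tendstoD(2))
  then obtain N where N: "\<And>n. n \<ge> N \<Longrightarrow> t ^ n * nv (y - c) < e"
    by (auto simp: eventually_sequentially)
  show "\<exists>N. \<forall>n\<ge>N. nv ((f ^^ n) y - c) < e"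
    using N contr_iter[OF assms(1) _ assms(3,4)] assms(2)
    by (meson less_imp_le order_le_less_trans)
qed

lemma outside_iter:
  assumes "\<And>z. z \<noteq> P \<Longrightarrow> nv (z - c) \<ge> r \<Longrightarrow> nv (f z - c) \<ge> r"
    "\<forall>n. (f ^^ n) y \<noteq> P" "nv (y - c) \<ge> r" "r > 0"
  shows "\<not> nv_conv nv (\<lambda>n. (f ^^ n) y) c"
proof
  have all: "nv ((f ^^ n) y - c) \<ge> r" for n
    by (induction n) (use assms in auto)
  assume "nv_conv nv (\<lambda>n. (f ^^ n) y) c"
  then obtain N where "\<forall>n\<ge>N. nv ((f ^^ n) y - c) < r" using assms(4) unfolding nv_conv_def by blast
  thus False using all[of N] by auto
qed

lemma real_aux:
  fixes A B u D M :: real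
  assumes "A > 0" "B \<ge> 0" "B \<le> A" "u \<ge> 1 / A" "D > 0" "D \<le> max (B * u) 1" "M \<ge> u"
  shows "A * u * M / D \<ge> 1 / A"
proof -
  have u0: "u > 0" using assms(1,4) by (smt (verit) divide_pos_pos)
  have "A * u * M / D \<ge> A * u * u / D"
    using assms u0 by (simp add: divide_right_mono)
  moreover have "A * u * u / D \<ge> 1 / A"
  proof (cases "D \<le> 1")
    case True
    have "A * u * u / D \<ge> A * u * u" using True assms u0
      by (simp add: le_divide_eq)
    moreover have "A * u \<ge> 1" using assms(1,4) by (simp add: field_simps)
    hence "A * u * u \<ge> u" using u0 by (simp add: mult_le_cancel_right1)
    ultimately show ?thesis using assms(4) by linarith
  next
    case False
    hence D: "D \<le> B * u" using assms(6) by auto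
    have "A * u * u / D \<ge> A * u * u / (B * u)"
      using D assms u0 by (intro divide_left_mono) auto
    moreover have "A * u * u / (B * u) = (A / B) * u" using u0 by simp
    moreover have "B * u > 0" using D False by linarith
    hence "B > 0" using u0 by (simp add: zero_less_mult_iff)
    hence "A / B \<ge> 1" using assms(3) by simp
    hence "(A / B) * u \<ge> u" using u0 mult_right_mono[of 1 "A/B" u] by simp
    ultimately show ?thesis using assms(4) by linarith
  qed
  ultimately show ?thesis by linarith
qed

lemma key:
  fixes a b c e x P :: 'a and f :: "'a \<Rightarrow> 'a"
  assumes A: "nv a > 0" and BA: "nv b < nv a" and C: "nv c < 1 / nv a" and E: "nv e = 1"
    and Pdef: "P = - 1 / b" and b0: "b \<noteq> 0" and Px: "nv (P - x) \<ge> 1 / nv a"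
    and fid: "\<And>z. b * z + 1 \<noteq> 0 \<Longrightarrow> f z - x = a * (z - x) * ((z - x) + c) / (b * (z - x) + e)"
    and bid: "\<And>z. b * z + 1 = b * (z - x) + e"
  shows "basin nv f P x = nv_ball nv x (1 / nv a)"
proof -
  define Aa where "Aa = nv a"
  have hzP: "b * z + 1 \<noteq> 0" if "z \<noteq> P" for z
  proof
    assume "b * z + 1 = 0"
    hence "z = - 1 / b" using b0 by (simp add: field_simps add_eq_0_iff)
    thus False using that Pdef by simp
  qed
  have nf: "nv (f z - x) = Aa * nv (z - x) * nv ((z - x) + c) / nv (b * (z - x) + e)"
    if "b * z + 1 \<noteq> 0" for z
    using fid[OF that] by (simp add: divide mult Aa_def)
  have B0: "nv b \<ge> 0" by (rule nonneg)
  show ?thesis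
  proof (rule set_eqI, rule iffI)
    fix y assume y: "y \<in> basin nv f P x"
    show "y \<in> nv_ball nv x (1 / nv a)"
    proof (rule ccontr)
      assume "y \<notin> nv_ball nv x (1 / nv a)"
      hence yo: "nv (y - x) \<ge> 1 / nv a" unfolding nv_ball_def by simp
      have out: "nv (f z - x) \<ge> 1 / nv a" if "z \<noteq> P" "nv (z - x) \<ge> 1 / nv a" for z
      proof -
        define u where "u = z - x"
        have nu: "nv u \<ge> 1 / Aa" using that u_def Aa_def by simp
        have M: "nv (u + c) = nv u" using strict[of c u] C nu Aa_def by (simp add: add.commute)
        have D0: "nv (b * u + e) > 0" using hzP[OF that(1)] bid[of z] u_def pos by simp
        have D1: "nv (b * u + e) \<le> max (nv b * nv u) 1" using ultra[of "b*u" e] E mult by simp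
        have "Aa * nv u * nv (u + c) / nv (b * u + e) \<ge> 1 / Aa"
          using real_aux[of Aa "nv b" "nv u" "nv (b * u + e)" "nv (u + c)"] A BA B0 nu D0 D1 M Aa_def
          by simp
        thus ?thesis using nf[OF hzP[OF that(1)]] u_def Aa_def by simp
      qed
      have "\<not> nv_conv nv (\<lambda>n. (f ^^ n) y) x"
        by (rule outside_iter[where P=P and c=x and r="1 / nv a" and f=f]) (use out y yo A in \<open>auto simp: basin_def\<close>)
      thus False using y by (simp add: basin_def)
    qed
  next
    fix y assume y: "y \<in> nv_ball nv x (1 / nv a)"
    define d0 where "d0 = nv (y - x)"
    have d0: "d0 < 1 / Aa" "d0 \<ge> 0" using y unfolding d0_def Aa_def nv_ball_def by (auto simp: nonneg)
    define t where "t = max (Aa * d0) (Aa * nv c)"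
    have t0: "t \<ge> 0" using A d0 Aa_def t_def by (simp add: le_max_iff_disj)
    have t1: "t < 1" using d0 C A Aa_def t_def by (auto simp: field_simps)
    have contr: "nv (f z - x) \<le> t * nv (z - x)" if "nv (z - x) \<le> d0" for z
    proof -
      define u where "u = z - x"
      have "nv (b * u) = nv b * nv u" by (rule mult)
      also have "\<dots> \<le> Aa * d0" using that u_def BA B0 Aa_def nonneg[of u]
        by (simp add: mult_mono)
      also have "\<dots> < 1" using d0 A Aa_def by (simp add: field_simps)
      finally have n1: "nv (b * u + e) = 1" using strict[of "b * u" e] E by simp
      have bz: "b * z + 1 \<noteq> 0"
      proof
        assume "b * z + 1 = 0"
        hence "b * u + e = 0" using bid[of z] u_def by simp
        hence "nv (b * u + e) = 0" using zero_iff by simp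
        thus False using n1 by simp
      qed
      have eq: "nv (f z - x) = Aa * nv u * nv (u + c)" using nf[OF bz] u_def n1 by simp
      have "nv (u + c) \<le> max (nv u) (nv c)" by (rule ultra)
      hence "Aa * nv (u + c) \<le> t" using that u_def A Aa_def t_def
        by (auto simp: max_def mult_left_mono split: if_splits)
      hence "Aa * nv (u + c) * nv u \<le> t * nv u" using nonneg[of u] mult_right_mono by blast
      thus ?thesis using eq u_def by (simp add: mult_ac)
    qed
    have conv: "nv_conv nv (\<lambda>n. (f ^^ n) y) x"
      using contr_conv[where y=y, OF t0 t1 contr] d0_def by (simp add: order_refl)
    have "(f ^^ n) y \<noteq> P" for n
    proof
      assume eq: "(f ^^ n) y = P"
      have "nv ((f ^^ n) y - x) \<le> t ^ n * nv (y - x)"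
        using contr_iter[where y=y and n=n, OF t0 _ contr] t1 d0_def by (simp add: order_refl)
      also have "\<dots> \<le> d0" using t0 t1 d0 d0_def
        by (simp add: mult_left_le_one_le power_le_one)
      finally show False using eq Px d0 Aa_def by simp
    qed
    thus "y \<in> basin nv f P x" using conv by (simp add: basin_def)
  qed
qed

lemma deriv_key:
  fixes a b c e x :: 'a and f :: "'a \<Rightarrow> 'a"
  assumes A: "nv a > 0" and BA: "nv b < nv a" and C: "nv c < 1 / nv a" and E: "nv e = 1"
    and fid: "\<And>z. b * z + 1 \<noteq> 0 \<Longrightarrow> f z - x = a * (z - x) * ((z - x) + c) / (b * (z - x) + e)"
    and bid: "\<And>z. b * z + 1 = b * (z - x) + e"
    and fx: "f x = x"
  shows "nv_has_deriv nv f x (a * c / e) \<and> nv (a * c / e) < 1"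
proof
  have e0: "e \<noteq> 0" using E zero_iff[of e] by auto
  show "nv (a * c / e) < 1" using A C E by (simp add: divide mult field_simps)
  show "nv_has_deriv nv f x (a * c / e)"
    unfolding nv_has_deriv_def
  proof (intro allI impI)
    fix eps :: real assume eps: "eps > 0"
    show "\<exists>\<delta>>0. \<forall>y. y \<noteq> x \<and> nv (y - x) < \<delta> \<longrightarrow> nv ((f y - f x) / (y - x) - a * c / e) < eps"
    proof (intro exI[of _ "min (eps / nv a) (1 / nv a)"] conjI allI impI)
      show "min (eps / nv a) (1 / nv a) > 0" using eps A by simp
      fix y assume y: "y \<noteq> x \<and> nv (y - x) < min (eps / nv a) (1 / nv a)"
      define u where "u = y - x"
      have u0: "u \<noteq> 0" using y u_def by simp
      have nu1: "nv u < 1 / nv a" and nu2: "nv u < eps / nv a" using y u_def by auto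
      have "nv (b * u) = nv b * nv u" by (rule mult)
      also have "\<dots> \<le> nv a * nv u" using BA nonneg[of u] by (simp add: mult_right_mono)
      also have "\<dots> < 1" using nu1 A by (simp add: field_simps)
      finally have bu: "nv (b * u) < 1" .
      hence n1: "nv (b * u + e) = 1" using strict[of "b * u" e] E by simp
      have be0: "b * u + e \<noteq> 0" using n1 zero_iff[of "b * u + e"] by auto
      have bz: "b * y + 1 \<noteq> 0" using be0 bid[of y] u_def by simp
      have "(f y - f x) / (y - x) - a * c / e = (f y - x) / u - a * c / e" using fx u_def by simp
      also have "\<dots> = a * u * (u + c) / (b * u + e) / u - a * c / e" using fid[OF bz] u_def by simp
      also have "\<dots> = a * (u + c) / (b * u + e) - a * c / e" using u0 by simp
      also have "\<dots> = (a * (u + c) * e - a * c * (b * u + e)) / ((b * u + e) * e)"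
        by (rule diff_frac_eq[OF be0 e0])
      also have "a * (u + c) * e - a * c * (b * u + e) = a * u * (e - c * b)"
        by (simp add: algebra_simps)
      also have "(b * u + e) * e = e * (b * u + e)" by (simp add: mult.commute)
      finally have eq: "(f y - f x) / (y - x) - a * c / e = a * u * (e - c * b) / (e * (b * u + e))" .
      have "nv (e - c * b) \<le> max (nv e) (nv (c * b))" by (rule diff_le)
      moreover have "nv (c * b) < 1"
      proof -
        have "nv (c * b) = nv c * nv b" by (rule mult)
        also have "\<dots> \<le> (1 / nv a) * nv a" using C BA nonneg[of b] nonneg[of c]
          by (intro mult_mono) auto
        also have "\<dots> = 1" using A by simp
        finally have "nv (c * b) \<le> 1" .
        moreover have "nv c * nv b < 1"
        proof (cases "nv b = 0")
          case True thus ?thesis by simp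
        next
          case False
          hence "nv b > 0" using nonneg[of b] by simp
          hence "nv c * nv b < (1 / nv a) * nv b" using C by (rule mult_strict_right_mono[rotated])
          also have "\<dots> \<le> 1" using BA A by (simp add: field_simps)
          finally show ?thesis .
        qed
        ultimately show ?thesis using mult by simp
      qed
      ultimately have ec: "nv (e - c * b) \<le> 1" using E by simp
      have "nv (a * u * (e - c * b) / (e * (b * u + e))) = nv a * nv u * nv (e - c * b)"
        using E n1 by (simp add: divide mult)
      also have "\<dots> \<le> nv a * nv u" using ec A nonneg[of u]
        by (simp add: mult_left_le)
      also have "\<dots> < eps" using nu2 A by (simp add: field_simps)
      finally show "nv ((f y - f x) / (y - x) - a * c / e) < eps" using eq by simp
    qed
  qed
qed

end

lemma c2_ultra: "complex_2adic nv \<Longrightarrow> ultra nv"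
  unfolding complex_2adic_def ultra_def by blast

theorem theorem3p8:
  fixes nv :: "'a::field \<Rightarrow> real" and a b :: 'a
  assumes "complex_2adic nv"
    and "a \<noteq> 0" "b \<noteq> 0" "a \<noteq> b"
    and "nv (2 * a) > nv b"
  defines "P \<equiv> - 1 / b"
    and "f \<equiv> (\<lambda>x. a * x ^ 2 / (b * x + 1))"
    and "x1 \<equiv> 0"
    and "x2 \<equiv> 1 / (a - b)"
    and "r1 \<equiv> 1 / nv a"
  shows "attracting_fixed_point nv f P x1 \<and> attracting_fixed_point nv f P x2 \<and>
         basin nv f P x1 = nv_ball nv x1 r1 \<and> basin nv f P x2 = nv_ball nv x2 r1"
proof -
  interpret U: ultra nv using assms(1) by (rule c2_ultra)
  have n2: "nv 2 = 1/2" using assms(1) unfolding complex_2adic_def by blast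
  have A: "nv a > 0" using U.pos assms(2) by simp
  have B: "nv b > 0" using U.pos assms(3) by simp
  have BA2: "nv b < nv a / 2" using assms(5) n2 U.mult[of 2 a] by simp
  have BA: "nv b < nv a" using BA2 A by simp
  have ab0: "a - b \<noteq> 0" using assms(4) by simp
  have nab: "nv (a - b) = nv a"
    using U.strict[of "- b" a] U.minus[of b] BA by simp
  have n2ab: "nv (2 * a - b) = nv a / 2"
    using U.strict[of "- b" "2 * a"] U.minus[of b] BA2 U.mult[of 2 a] n2 by simp
  have nP: "nv P = 1 / nv b" using U.divide U.minus U.one P_def by simp
  have hP: "1 / nv a \<le> 1 / nv b" using A B BA by (simp add: frac_le)
  have fid1: "f z - x1 = a * (z - x1) * ((z - x1) + 0) / (b * (z - x1) + 1)" for z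
    unfolding f_def x1_def by (simp add: power2_eq_square)
  have bid1: "b * z + 1 = b * (z - x1) + 1" for z unfolding x1_def by simp
  have Px1: "nv (P - x1) \<ge> 1 / nv a" using nP hP x1_def by simp
  have fx1: "f x1 = x1" unfolding f_def x1_def by simp
  have bas1: "basin nv f P x1 = nv_ball nv x1 r1"
    unfolding r1_def
    by (rule U.key[where c=0 and e=1]) (use A BA U.one U.zero_iff[of 0] P_def assms(3) Px1 fid1 bid1 in auto)
  have d1: "nv_has_deriv nv f x1 (a * 0 / 1) \<and> nv (a * 0 / 1) < 1"
    by (rule U.deriv_key[where c=0 and e=1]) (use A BA U.one U.zero_iff[of 0] fid1 bid1 fx1 in auto)
  have x1P: "x1 \<noteq> P" using x1_def P_def assms(3) by simp
  have att1: "attracting_fixed_point nv f P x1"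
    unfolding attracting_fixed_point_def using x1P fx1 d1 by blast
  define c where "c = (2 * a - b) / (a * (a - b))"
  define e where "e = a / (a - b)"
  have nc: "nv c < 1 / nv a"
  proof -
    have "nv c = nv (2 * a - b) / (nv a * nv (a - b))" unfolding c_def
      by (simp add: U.divide U.mult)
    also have "\<dots> = (nv a / 2) / (nv a * nv a)" by (simp only: n2ab nab)
    also have "\<dots> = 1 / (2 * nv a)" using A by (simp add: field_simps)
    also have "\<dots> < 1 / nv a" using A by (simp add: field_simps)
    finally show ?thesis .
  qed
  have ne: "nv e = 1" unfolding e_def using nab A by (simp add: U.divide)
  have bid2: "b * z + 1 = b * (z - x2) + e" for z
  proof -
    have "b * (z - x2) + e = b * z + (a / (a - b) - b / (a - b))"
      by (simp add: x2_def e_def algebra_simps)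
    also have "a / (a - b) - b / (a - b) = 1"
      using ab0 by (simp add: diff_divide_distrib[symmetric])
    finally show ?thesis by simp
  qed
  have fid2: "f z - x2 = a * (z - x2) * ((z - x2) + c) / (b * (z - x2) + e)"
    if bz: "b * z + 1 \<noteq> 0" for z
  proof -
    have bz': "b * (z - x2) + e \<noteq> 0" using bz bid2[of z] by simp
    have "f z - x2 = a * z ^ 2 / (b * z + 1) - 1 / (a - b)" unfolding f_def x2_def by simp
    also have "\<dots> = (a * z ^ 2 * (a - b) - (b * z + 1)) / ((b * z + 1) * (a - b))"
      using diff_frac_eq[OF bz ab0, of "a * z ^ 2" 1] by simp
    also have "a * z ^ 2 * (a - b) - (b * z + 1) = a * (a - b) * (z - x2) * (z + 1 / a)"
      unfolding x2_def using ab0 assms(2) by (simp add: field_simps power2_eq_square)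
    also have "z + 1 / a = (z - x2) + c"
    proof -
      have i1: "1 / (a - b) = a / (a * (a - b))" using assms(2) by simp
      have "(2 * a - b) / (a * (a - b)) - 1 / (a - b) = (2 * a - b - a) / (a * (a - b))"
        unfolding i1 by (simp add: diff_divide_distrib)
      also have "2 * a - b - a = a - b" by (simp add: algebra_simps)
      also have "(a - b) / (a * (a - b)) = 1 / a" using ab0 by simp
      finally have "c - x2 = 1 / a" unfolding c_def x2_def .
      thus ?thesis by (simp add: algebra_simps)
    qed
    also have "(b * z + 1) * (a - b) = (b * (z - x2) + e) * (a - b)" using bid2[of z] by simp
    finally have "f z - x2 = (a * (z - x2) * ((z - x2) + c) * (a - b)) / ((b * (z - x2) + e) * (a - b))"
      by (simp add: mult_ac)
    thus ?thesis using nonzero_mult_divide_mult_cancel_right[OF ab0] by simp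
  qed
  have nx2: "nv x2 = 1 / nv a" unfolding x2_def using nab by (simp add: U.divide U.one)
  have nPx2: "nv (P - x2) = 1 / nv b"
    using U.strict[of "- x2" P] U.minus[of x2] nx2 nP BA A B by (simp add: frac_less2)
  have Px2: "nv (P - x2) \<ge> 1 / nv a" using nPx2 hP by simp
  have fx2: "f x2 = x2"
  proof -
    have "b * x2 + 1 = e" using bid2[of x2] by simp
    hence "b * x2 + 1 \<noteq> 0" using ne U.zero_iff[of e] by auto
    thus ?thesis using fid2[of x2] by simp
  qed
  have bas2: "basin nv f P x2 = nv_ball nv x2 r1"
    unfolding r1_def
    by (rule U.key[where c=c and e=e]) (use A BA nc ne P_def assms(3) Px2 fid2 bid2 in auto)
  have d2: "nv_has_deriv nv f x2 (a * c / e) \<and> nv (a * c / e) < 1"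
    by (rule U.deriv_key[where c=c and e=e]) (use A BA nc ne fid2 bid2 fx2 in auto)
  have x2P: "x2 \<noteq> P" using nPx2 U.zero_iff[of "P - x2"] B by auto
  have att2: "attracting_fixed_point nv f P x2"
    unfolding attracting_fixed_point_def using x2P fx2 d2 by blast
  show ?thesis using att1 att2 bas1 bas2 by blast
qed

end
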